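(* Let $K\subset\mathbb{R}^n$ and $C\subset\mathbb{R}^m$ be nonempty, convex, closed and bounded sets, and let $f,h:\mathbb{R}^n\times\mathbb{R}^m\to\mathbb{R}$ be continuous functions such that, for every $y\in K$, $f(y,\cdot)$ and $h(y,\cdot)$ are convex, and such that $f$ takes only positive values. Fix $\varepsilon>0$ and, for $y\in K$, let $\mathcal{S}_\varepsilon(y)=\operatorname{argmin}\{h(y,z)+\varepsilon f^2(y,z)\mid z\in C\}$. Then the map $v_\varepsilon: y\mapsto\{f(y,x)\mid x\in\mathcal{S}_\varepsilon(y)\}$, defined on $K$, is single-valued, and the resulting real-valued function $v_\varepsilon:K\to\mathbb{R}$ is continuous.
   Context: $f^2(y,z)$ denotes $(f(y,z))^2$. *)

theory Defs
  imports "HOL-Analysis.Analysis"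
begin

definition S_eps :: "('a \<Rightarrow> 'b \<Rightarrow> real) \<Rightarrow> ('a \<Rightarrow> 'b \<Rightarrow> real) \<Rightarrow> real \<Rightarrow> 'b set \<Rightarrow> 'a \<Rightarrow> 'b set" where
  "S_eps f h \<epsilon> C y =
     {z \<in> C. \<forall>w\<in>C. h y z + \<epsilon> * (f y z)\<^sup>2 \<le> h y w + \<epsilon> * (f y w)\<^sup>2}"

end

theory Submission
  imports Defs
begin

theorem lemma2p3:
  fixes K :: "(real^'n) set" and C :: "(real^'m) set"
    and f h :: "real^'n \<Rightarrow> real^'m \<Rightarrow> real" and \<epsilon> :: real
  assumes "K \<noteq> {}" "convex K" "closed K" "bounded K"
    and "C \<noteq> {}" "convex C" "closed C" "bounded C"
    and "continuous_on UNIV (\<lambda>(y, z). f y z)"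
    and "continuous_on UNIV (\<lambda>(y, z). h y z)"
    and "\<And>y. y \<in> K \<Longrightarrow> convex_on UNIV (f y)"
    and "\<And>y. y \<in> K \<Longrightarrow> convex_on UNIV (h y)"
    and "\<And>y z. f y z > 0"
    and "\<epsilon> > 0"
  shows "\<exists>v :: real^'n \<Rightarrow> real.
           (\<forall>y\<in>K. {f y x | x. x \<in> S_eps f h \<epsilon> C y} = {v y}) \<and> continuous_on K v"
proof -
  define g where "g = (\<lambda>y z. h y z + \<epsilon> * (f y z)\<^sup>2)"
  have S_def: "S_eps f h \<epsilon> C y = {z \<in> C. \<forall>w\<in>C. g y z \<le> g y w}" for y
    by (simp add: S_eps_def g_def)
  have cf: "continuous_on UNIV (\<lambda>p. f (fst p) (snd p))"
    using assms(9) by (simp add: case_prod_beta)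
  have ch: "continuous_on UNIV (\<lambda>p. h (fst p) (snd p))"
    using assms(10) by (simp add: case_prod_beta)
  have cg: "continuous_on UNIV (\<lambda>p. g (fst p) (snd p))"
    unfolding g_def by (intro continuous_intros cf ch)
  have cgy: "continuous_on UNIV (g y)" for y
  proof -
    have "continuous_on UNIV ((\<lambda>p. g (fst p) (snd p)) \<circ> (\<lambda>z. (y, z)))"
      by (rule continuous_on_compose[OF _ continuous_on_subset[OF cg]]) (auto intro: continuous_intros)
    then show ?thesis by (simp add: o_def)
  qed
  have cgw: "continuous_on UNIV (\<lambda>p. g (fst p) w)" for w
  proof -
    have "continuous_on UNIV ((\<lambda>p. g (fst p) (snd p)) \<circ> (\<lambda>p. (fst p, w)))"
      by (rule continuous_on_compose[OF _ continuous_on_subset[OF cg]]) (intro continuous_intros, simp)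
    then show ?thesis by (simp add: o_def)
  qed
  have compC: "compact C" using assms(7,8) by (simp add: compact_eq_bounded_closed)
  have compK: "compact K" using assms(3,4) by (simp add: compact_eq_bounded_closed)
  have ne: "\<exists>z. z \<in> S_eps f h \<epsilon> C y" for y
    using continuous_attains_inf[OF compC assms(5) continuous_on_subset[OF cgy subset_UNIV]]
    unfolding S_def by blast
  have uniq: "f y z1 = f y z2" if y: "y \<in> K" and z1: "z1 \<in> S_eps f h \<epsilon> C y"
    and z2: "z2 \<in> S_eps f h \<epsilon> C y" for y z1 z2
  proof (rule ccontr)
    assume neq: "f y z1 \<noteq> f y z2"
    define m where "m = (1/2) *\<^sub>R z1 + (1/2) *\<^sub>R z2"
    have zC: "z1 \<in> C" "z2 \<in> C" using z1 z2 by (auto simp: S_def)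
    have mC: "m \<in> C" unfolding m_def
      using assms(6) zC by (simp add: convex_def)
    have hm: "h y m \<le> (1/2) * h y z1 + (1/2) * h y z2"
      using convex_onD[OF assms(12)[OF y], of "1/2" z1 z2] by (simp add: m_def)
    have fm: "f y m \<le> (1/2) * f y z1 + (1/2) * f y z2"
      using convex_onD[OF assms(11)[OF y], of "1/2" z1 z2] by (simp add: m_def)
    have fm2: "(f y m)\<^sup>2 \<le> ((1/2) * f y z1 + (1/2) * f y z2)\<^sup>2"
      using fm assms(13)[of y m] by (intro power_mono) auto
    have strict: "((1/2) * f y z1 + (1/2) * f y z2)\<^sup>2 < (1/2) * (f y z1)\<^sup>2 + (1/2) * (f y z2)\<^sup>2"
    proof -
      have "0 < (f y z1 - f y z2)\<^sup>2" using neq by simp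
      then show ?thesis by (simp add: power2_eq_square algebra_simps)
    qed
    have "g y m < (1/2) * g y z1 + (1/2) * g y z2"
    proof -
      have "\<epsilon> * (f y m)\<^sup>2 < \<epsilon> * ((1/2) * (f y z1)\<^sup>2 + (1/2) * (f y z2)\<^sup>2)"
        using fm2 strict assms(14) by (intro mult_strict_left_mono) auto
      then show ?thesis using hm unfolding g_def by (simp add: algebra_simps)
    qed
    moreover have "g y z1 \<le> g y m" "g y z2 \<le> g y m" using z1 z2 mC by (auto simp: S_def)
    ultimately show False by linarith
  qed
  define v where "v y = f y (SOME z. z \<in> S_eps f h \<epsilon> C y)" for y
  have vS: "\<exists>z \<in> S_eps f h \<epsilon> C y. v y = f y z" for y
  proof -
    have "(SOME z. z \<in> S_eps f h \<epsilon> C y) \<in> S_eps f h \<epsilon> C y" by (rule someI_ex[OF ne[of y]])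
    moreover have "v y = f y (SOME z. z \<in> S_eps f h \<epsilon> C y)" by (simp add: v_def)
    ultimately show ?thesis by (rule bexI[rotated])
  qed
  have part1: "\<forall>y\<in>K. {f y x | x. x \<in> S_eps f h \<epsilon> C y} = {v y}"
  proof
    fix y assume y: "y \<in> K"
    obtain z0 where z0: "z0 \<in> S_eps f h \<epsilon> C y" "v y = f y z0" using vS by blast
    show "{f y x | x. x \<in> S_eps f h \<epsilon> C y} = {v y}"
    proof (intro equalityI subsetI)
      fix t assume "t \<in> {f y x | x. x \<in> S_eps f h \<epsilon> C y}"
      then obtain x where x: "x \<in> S_eps f h \<epsilon> C y" "t = f y x" by (auto simp only: mem_Collect_eq)
      have "t = v y" using uniq[OF y x(1) z0(1)] x(2) z0(2) by simp
      then show "t \<in> {v y}" by simp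
    next
      fix t assume "t \<in> {v y}"
      then have "t = f y z0" using z0(2) by simp
      then show "t \<in> {f y x | x. x \<in> S_eps f h \<epsilon> C y}" using z0(1) by (auto simp only: mem_Collect_eq)
    qed
  qed
  define G where "G = (K \<times> C) \<inter> (\<Inter>w\<in>C. {p. g (fst p) (snd p) \<le> g (fst p) w})"
  have closedG: "closed G" unfolding G_def
    by (intro closed_Int closed_Times assms(3,7) closed_INT ballI closed_Collect_le cg cgw)
  have boundedG: "bounded G" unfolding G_def
    by (rule bounded_subset[OF bounded_Times[OF assms(4,8)]]) auto
  have compG: "compact G" using closedG boundedG by (simp add: compact_eq_bounded_closed)
  have graph: "(\<lambda>x. Pair x (v x)) ` K = (\<lambda>p. (fst p, f (fst p) (snd p))) ` G"
  proof
    show "(\<lambda>x. Pair x (v x)) ` K \<subseteq> (\<lambda>p. (fst p, f (fst p) (snd p))) ` G"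
    proof
      fix q assume "q \<in> (\<lambda>x. Pair x (v x)) ` K"
      then obtain y where y: "y \<in> K" "q = (y, v y)" by blast
      obtain z where z: "z \<in> S_eps f h \<epsilon> C y" "v y = f y z" using vS by blast
      have "(y, z) \<in> G" using y z unfolding G_def S_def by auto
      then show "q \<in> (\<lambda>p. (fst p, f (fst p) (snd p))) ` G"
        using y z by (auto intro!: image_eqI[where x="(y,z)"])
    qed
  next
    show "(\<lambda>p. (fst p, f (fst p) (snd p))) ` G \<subseteq> (\<lambda>x. Pair x (v x)) ` K"
    proof
      fix q assume "q \<in> (\<lambda>p. (fst p, f (fst p) (snd p))) ` G"
      then obtain y z where yz: "(y, z) \<in> G" "q = (y, f y z)" by auto
      have y: "y \<in> K" and zS: "z \<in> S_eps f h \<epsilon> C y" using yz unfolding G_def S_def by auto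
      obtain z' where z': "z' \<in> S_eps f h \<epsilon> C y" "v y = f y z'" using vS by blast
      have "f y z = v y" using uniq[OF y zS z'(1)] z' by simp
      then show "q \<in> (\<lambda>x. Pair x (v x)) ` K" using yz y by auto
    qed
  qed
  have "compact ((\<lambda>p. (fst p, f (fst p) (snd p))) ` G)"
    by (rule compact_continuous_image[OF _ compG])
       (intro continuous_intros continuous_on_subset[OF cf subset_UNIV])
  then have clo: "closed ((\<lambda>x. Pair x (v x)) ` K)"
    using graph compact_imp_closed by metis
  define T where "T = (\<lambda>p. f (fst p) (snd p)) ` (K \<times> C)"
  have compT: "compact T" unfolding T_def
    by (rule compact_continuous_image[OF continuous_on_subset[OF cf subset_UNIV]])
       (intro compact_Times compK compC)
  have fim: "v \<in> K \<rightarrow> T"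
  proof
    fix y assume y: "y \<in> K"
    obtain z where z: "z \<in> S_eps f h \<epsilon> C y" "v y = f y z" using vS by blast
    then have "z \<in> C" by (simp add: S_def)
    then show "v y \<in> T" unfolding T_def using y z by (auto intro!: image_eqI[where x="(y,z)"])
  qed
  have "continuous_on K v"
    by (rule continuous_from_closed_graph[OF compT fim clo])
  with part1 show ?thesis by blast
qed

end
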